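(* Let $T_1\cup\dots\cup T_L=[n]$ be a partition, $p_\ell$ integers and $\Gamma$ an integer. The coefficient matrix (in the variables $(\pmb y,\pmb\delta)\in\mathbb R^n\times\mathbb R^n$) of the constraint system \[y_i+\delta_i\le1\ \ \forall i\in[n],\qquad \sum_{i\in[n]}\delta_i\le\Gamma,\qquad \sum_{i\in T_\ell}y_i=p_\ell\ \ \forall\ell\in[L]\] is totally unimodular.
   Context: $[n]=\{1,\dots,n\}$. This is the constraint system of the adversarial problem of balanced regret multi-representative selection for a fixed value of the auxiliary variable $s$, namely $\max\ \sum_i(\hat c_i+d_i\delta_i)x_i-\sum_i\hat c_iy_i-\Gamma's-\sum_i[d_i-d_ix_i-s]_+y_i$ subject to these constraints and $\pmb y,\pmb\delta$ binary. *)

theory Defs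
  imports "Jordan_Normal_Form.Determinant" "Jordan_Normal_Form.DL_Submatrix"
begin

definition totally_unimodular :: "int mat \<Rightarrow> bool" where
  "totally_unimodular A \<longleftrightarrow>
     (\<forall>I J. I \<subseteq> {..<dim_row A} \<longrightarrow> J \<subseteq> {..<dim_col A} \<longrightarrow> card I = card J \<longrightarrow>
        det (submatrix A I J) \<in> {-1, 0, 1})"

text \<open>Coefficient matrix of the system (0-based indices).
  Columns: 0..n-1 are y_0..y_{n-1}; n..2n-1 are delta_0..delta_{n-1}.
  Rows: i < n is  y_i + delta_i <= 1;  row n is  sum_i delta_i <= Gamma;
  row n+1+l (l < L) is  sum_{i in T l} y_i = p_l.\<close>
definition brmrs_matrix :: "nat \<Rightarrow> nat \<Rightarrow> (nat \<Rightarrow> nat set) \<Rightarrow> int mat" where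
  "brmrs_matrix n L T = mat (n + 1 + L) (2 * n) (\<lambda>(r, c).
     if r < n then (if c = r \<or> c = n + r then 1 else 0)
     else if r = n then (if n \<le> c then 1 else 0)
     else (if c < n \<and> c \<in> T (r - n - 1) then 1 else 0))"

end

theory Submission
  imports Defs
begin

definition good01 :: "(nat \<Rightarrow> bool) \<Rightarrow> int mat \<Rightarrow> bool" where
  "good01 f M \<longleftrightarrow> (\<forall>i<dim_row M. \<forall>j<dim_col M. M$$(i,j) = 0 \<or> M$$(i,j) = 1) \<and>
     (\<forall>i1<dim_row M. \<forall>i2<dim_row M. \<forall>j<dim_col M. i1 \<noteq> i2 \<longrightarrow> M$$(i1,j) = 1 \<longrightarrow> M$$(i2,j) = 1 \<longrightarrow> f i1 \<noteq> f i2)"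

lemma good01_det:
  assumes "M \<in> carrier_mat k k" "good01 f M"
  shows "det M \<in> {-1, 0, 1}"
  using assms
proof (induction k arbitrary: M f)
  case 0
  then show ?case by simp
next
  case (Suc k)
  have M: "M \<in> carrier_mat (Suc k) (Suc k)" by fact
  have dims: "dim_row M = Suc k" "dim_col M = Suc k" using M by auto
  have G: "(\<forall>i<Suc k. \<forall>j<Suc k. M$$(i,j) = 0 \<or> M$$(i,j) = 1) \<and>
     (\<forall>i1<Suc k. \<forall>i2<Suc k. \<forall>j<Suc k. i1 \<noteq> i2 \<longrightarrow> M$$(i1,j) = 1 \<longrightarrow> M$$(i2,j) = 1 \<longrightarrow> f i1 \<noteq> f i2)"
    using Suc.prems(2) unfolding good01_def dims .
  have g01: "M$$(i,j) = 0 \<or> M$$(i,j) = 1" if "i < Suc k" "j < Suc k" for i j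
    using G[THEN conjunct1, rule_format, OF that] .
  have gf: "f i1 \<noteq> f i2" if "i1 < Suc k" "i2 < Suc k" "j < Suc k" "i1 \<noteq> i2"
      "M$$(i1,j) = 1" "M$$(i2,j) = 1" for i1 i2 j
    using G[THEN conjunct2, rule_format, OF that] .
  show ?case
  proof (cases "\<exists>j<Suc k. \<forall>i<Suc k. M$$(i,j) = 0")
    case True
    then obtain j where j: "j < Suc k" "\<forall>i<Suc k. M$$(i,j) = 0" by auto
    have "det M = (\<Sum>i<Suc k. M $$ (i,j) * cofactor M i j)"
      by (rule laplace_expansion_column[OF M j(1)])
    also have "\<dots> = 0" using j(2) by simp
    finally show ?thesis by simp
  next
    case False
    note F1 = False
    show ?thesis
    proof (cases "\<exists>j<Suc k. \<exists>i<Suc k. M$$(i,j) = 1 \<and> (\<forall>i'<Suc k. i' \<noteq> i \<longrightarrow> M$$(i',j) = 0)")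
      case True
      then obtain i j where ij: "j < Suc k" "i < Suc k" "M$$(i,j) = 1"
        "\<forall>i'<Suc k. i' \<noteq> i \<longrightarrow> M$$(i',j) = 0" by auto
      have "det M = (\<Sum>i'<Suc k. M $$ (i',j) * cofactor M i' j)"
        by (rule laplace_expansion_column[OF M ij(1)])
      also have "\<dots> = M $$ (i,j) * cofactor M i j"
        by (rule sum.mono_neutral_right[where S="{i}", simplified]) (use ij in auto)
      also have "\<dots> = (-1)^(i+j) * det (mat_delete M i j)"
        using ij(3) unfolding cofactor_def by simp
      finally have d: "det M = (-1)^(i+j) * det (mat_delete M i j)" .
      let ?h = "\<lambda>a. if a < i then a else Suc a"
      have Dc: "mat_delete M i j \<in> carrier_mat k k"
        using mat_delete_carrier[OF M] by simp
      have Didx: "\<And>a b. a < k \<Longrightarrow> b < k \<Longrightarrow> mat_delete M i j $$ (a,b) = M $$ (?h a, if b < j then b else Suc b)"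
        using M unfolding mat_delete_def by auto
      have "good01 (\<lambda>a. f (?h a)) (mat_delete M i j)"
        unfolding good01_def
      proof (intro conjI allI impI)
        fix a b assume "a < dim_row (mat_delete M i j)" "b < dim_col (mat_delete M i j)"
        then have ab: "a < k" "b < k" using Dc by auto
        show "mat_delete M i j $$ (a, b) = 0 \<or> mat_delete M i j $$ (a, b) = 1"
          unfolding Didx[OF ab] by (rule g01) (use ab in auto)
      next
        fix a1 a2 b assume "a1 < dim_row (mat_delete M i j)" "a2 < dim_row (mat_delete M i j)"
          "b < dim_col (mat_delete M i j)" and ne: "a1 \<noteq> a2"
          and e1: "mat_delete M i j $$ (a1, b) = 1" and e2: "mat_delete M i j $$ (a2, b) = 1"
        then have ab: "a1 < k" "a2 < k" "b < k" using Dc by auto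
        show "f (?h a1) \<noteq> f (?h a2)"
          by (rule gf[of _ _ "if b < j then b else Suc b"])
             (use ab ne e1 e2 Didx in auto)
      qed
      from Suc.IH[OF Dc this] have "det (mat_delete M i j) \<in> {-1,0,1}" .
      then show ?thesis unfolding d
        by (cases "even (i+j)") auto
    next
      case False
      note F2 = False
      have col: "\<exists>i1 i2. i1 < Suc k \<and> i2 < Suc k \<and> i1 \<noteq> i2 \<and> M$$(i1,j) = 1 \<and> M$$(i2,j) = 1 \<and>
          (\<forall>i<Suc k. M$$(i,j) \<noteq> 0 \<longrightarrow> i = i1 \<or> i = i2)" if j: "j < Suc k" for j
      proof -
        obtain i1 where i1: "i1 < Suc k" "M$$(i1,j) \<noteq> 0" using F1 j by auto
        then have i1': "M$$(i1,j) = 1" using g01 j by blast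
        obtain i2 where i2: "i2 < Suc k" "i2 \<noteq> i1" "M$$(i2,j) \<noteq> 0" using F2 j i1 i1' by auto
        then have i2': "M$$(i2,j) = 1" using g01 j by blast
        have "i = i1 \<or> i = i2" if "i < Suc k" "M$$(i,j) \<noteq> 0" for i
        proof (rule ccontr)
          assume nn: "\<not> (i = i1 \<or> i = i2)"
          have "M$$(i,j) = 1" using g01 j that by blast
          then have "f i \<noteq> f i1" "f i \<noteq> f i2" "f i1 \<noteq> f i2"
            using gf[OF that(1) i1(1) j] gf[OF that(1) i2(1) j] gf[OF i1(1) i2(1) j] nn i1' i2' i2(2)
            by auto
          then show False by auto
        qed
        then show ?thesis using i1 i1' i2 i2' by blast
      qed
      define v :: "int vec" where "v = vec (Suc k) (\<lambda>i. if f i then 1 else -1)"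
      have vc: "v \<in> carrier_vec (Suc k)" unfolding v_def by simp
      have vnz: "v \<noteq> 0\<^sub>v (Suc k)"
      proof
        assume "v = 0\<^sub>v (Suc k)"
        then have "v $ 0 = 0" by simp
        then show False unfolding v_def by (auto split: if_splits)
      qed
      have MT: "transpose_mat M \<in> carrier_mat (Suc k) (Suc k)" using M by simp
      have "transpose_mat M *\<^sub>v v = 0\<^sub>v (Suc k)"
      proof (rule eq_vecI)
        fix j assume "j < dim_vec (0\<^sub>v (Suc k) :: int vec)"
        then have j: "j < Suc k" by simp
        obtain i1 i2 where c: "i1 < Suc k" "i2 < Suc k" "i1 \<noteq> i2" "M$$(i1,j) = 1" "M$$(i2,j) = 1"
          "\<forall>i<Suc k. M$$(i,j) \<noteq> 0 \<longrightarrow> i = i1 \<or> i = i2" using col[OF j] by blast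
        have fne: "f i1 \<noteq> f i2" using gf[OF c(1) c(2) j c(3) c(4) c(5)] .
        have "(transpose_mat M *\<^sub>v v) $ j = (\<Sum>i<Suc k. M$$(i,j) * v $ i)"
          using M j vc unfolding mult_mat_vec_def scalar_prod_def
          by (auto simp: lessThan_atLeast0 intro!: sum.cong)
        also have "\<dots> = (\<Sum>i\<in>{i1,i2}. M$$(i,j) * v $ i)"
        proof (rule sum.mono_neutral_right)
          show "\<forall>i\<in>{..<Suc k} - {i1, i2}. M$$(i,j) * v $ i = 0"
          proof
            fix i assume "i \<in> {..<Suc k} - {i1, i2}"
            then have "M$$(i,j) = 0" using c(6) by blast
            then show "M$$(i,j) * v $ i = 0" by simp
          qed
        qed (use c in auto)
        also have "\<dots> = v $ i1 + v $ i2" using c by simp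
        also have "\<dots> = 0" using fne c unfolding v_def by auto
        finally show "(transpose_mat M *\<^sub>v v) $ j = 0\<^sub>v (Suc k) $ j" using j by simp
      qed (use MT in simp)
      then have "det (transpose_mat M) = 0"
        using det_0_iff_vec_prod_zero[OF MT] vc vnz by blast
      then have "det M = 0" using det_transpose[OF M] by simp
      then show ?thesis by simp
    qed
  qed
qed

theorem lemma6:
  fixes n L :: nat and T :: "nat \<Rightarrow> nat set" and p :: "nat \<Rightarrow> int" and \<Gamma> :: int
  assumes parts_nonempty: "\<forall>l<L. T l \<noteq> {}"
    and parts_disjoint: "\<forall>l<L. \<forall>l'<L. l \<noteq> l' \<longrightarrow> T l \<inter> T l' = {}"
    and parts_cover: "(\<Union>l<L. T l) = {..<n}"
  shows "totally_unimodular (brmrs_matrix n L T)"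
  unfolding totally_unimodular_def
proof (intro allI impI)
  fix I J
  let ?A = "brmrs_matrix n L T"
  assume I: "I \<subseteq> {..<dim_row ?A}" and J: "J \<subseteq> {..<dim_col ?A}" and cIJ: "card I = card J"
  have dA: "dim_row ?A = n + 1 + L" "dim_col ?A = 2 * n" unfolding brmrs_matrix_def by auto
  have Aidx: "\<And>r c. r < n + 1 + L \<Longrightarrow> c < 2 * n \<Longrightarrow> ?A $$ (r,c) =
     (if r < n then (if c = r \<or> c = n + r then 1 else 0)
     else if r = n then (if n \<le> c then 1 else 0)
     else (if c < n \<and> c \<in> T (r - n - 1) then 1 else 0))"
    unfolding brmrs_matrix_def by auto
  have sI: "{i. i < dim_row ?A \<and> i \<in> I} = I" using I by auto
  have sJ: "{j. j < dim_col ?A \<and> j \<in> J} = J" using J by auto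
  have finI: "finite I" using I finite_subset by blast
  have finJ: "finite J" using J finite_subset by blast
  let ?S = "submatrix ?A I J"
  have Sc: "?S \<in> carrier_mat (card I) (card I)"
    unfolding carrier_mat_def using dim_submatrix[of ?A I J] sI sJ cIJ by simp
  have Sidx: "\<And>a b. a < card I \<Longrightarrow> b < card I \<Longrightarrow> ?S $$ (a,b) = ?A $$ (pick I a, pick J b)"
    using submatrix_index[of _ ?A I _ J] sI sJ cIJ by auto
  have pI: "\<And>a. a < card I \<Longrightarrow> pick I a < n + 1 + L" using pick_in_set I dA by fastforce
  have pJ: "\<And>b. b < card I \<Longrightarrow> pick J b < 2 * n" using pick_in_set J dA cIJ by fastforce
  have pinj: "\<And>a1 a2. a1 < card I \<Longrightarrow> a2 < card I \<Longrightarrow> a1 \<noteq> a2 \<Longrightarrow> pick I a1 \<noteq> pick I a2"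
    by (metis linorder_neqE_nat pick_mono less_irrefl)
  have key: "(r1 < n) \<noteq> (r2 < n)" if "r1 < n + 1 + L" "r2 < n + 1 + L" "c < 2 * n" "r1 \<noteq> r2"
    "?A $$ (r1,c) = 1" "?A $$ (r2,c) = 1" for r1 r2 c
  proof -
    have e1: "(if r1 < n then (if c = r1 \<or> c = n + r1 then 1 else 0)
     else if r1 = n then (if n \<le> c then 1 else 0)
     else (if c < n \<and> c \<in> T (r1 - n - 1) then 1 else 0)) = (1::int)"
      using that Aidx by simp
    have e2: "(if r2 < n then (if c = r2 \<or> c = n + r2 then 1 else 0)
     else if r2 = n then (if n \<le> c then 1 else 0)
     else (if c < n \<and> c \<in> T (r2 - n - 1) then 1 else 0)) = (1::int)"
      using that Aidx by simp
    show ?thesis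
    proof (rule ccontr)
      assume "\<not> ?thesis"
      then consider "r1 < n" "r2 < n" | "\<not> r1 < n" "\<not> r2 < n" by blast
      then show False
      proof cases
        case 1 then show False using e1 e2 that(4) by (auto split: if_splits)
      next
        case 2
        show False
        proof (cases "r1 = n \<or> r2 = n")
          case True then show False using e1 e2 2 that(4) by (auto split: if_splits)
        next
          case False
          then have "c \<in> T (r1 - n - 1)" "c \<in> T (r2 - n - 1)" "r1 - n - 1 < L" "r2 - n - 1 < L"
            "r1 - n - 1 \<noteq> r2 - n - 1"
            using e1 e2 2 that(1,2,4) by (auto split: if_splits)
          then show False using parts_disjoint by blast
        qed
      qed
    qed
  qed
  have "good01 (\<lambda>a. pick I a < n) ?S"
    unfolding good01_def
  proof (intro conjI allI impI)
    fix a b assume "a < dim_row ?S" "b < dim_col ?S"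
    then have ab: "a < card I" "b < card I" using Sc by auto
    show "?S $$ (a,b) = 0 \<or> ?S $$ (a,b) = 1"
      unfolding Sidx[OF ab] using Aidx[OF pI[OF ab(1)] pJ[OF ab(2)]] by auto
  next
    fix a1 a2 b assume "a1 < dim_row ?S" "a2 < dim_row ?S" "b < dim_col ?S" and ne: "a1 \<noteq> a2"
      and e1: "?S $$ (a1,b) = 1" and e2: "?S $$ (a2,b) = 1"
    then have ab: "a1 < card I" "a2 < card I" "b < card I" using Sc by auto
    show "(pick I a1 < n) \<noteq> (pick I a2 < n)"
      by (rule key[OF pI[OF ab(1)] pI[OF ab(2)] pJ[OF ab(3)] pinj[OF ab(1,2) ne]])
         (use e1 e2 Sidx ab in auto)
  qed
  from good01_det[OF Sc this] show "det ?S \<in> {-1, 0, 1}" .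
qed

end
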